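(* Let $F$ be a chordal graph. (b) For every function $f:\wp(V_F)\to\mathbb R$, \[ \sum_{S\subseteq\mathsf{MaxCliques}(F)} -(-1)^{|S|} f\big({\textstyle\bigcap}S\big)=\sum_{A\subseteq V_F}(L_{V_F}f)(A)\cdot\mathsf{CC}(F|_A). \] (c) For every graph $G$, every homomorphism $\varphi:F\to G$, and every function $g:\wp(V_G)\to\mathbb R$, \[ \sum_{S\subseteq\mathsf{MaxCliques}(F)} -(-1)^{|S|} g\big(\varphi({\textstyle\bigcap}S)\big)=\sum_{A\subseteq V_G}(L_{V_G}g)(A)\cdot\mathsf{CC}\big(F|_{\varphi^{-1}(A)}\big). \]
   Context: Graphs are finite directed graphs; cliques, chordality, connectivity refer to the underlying simple undirected graph (edges $\{v,w\}$, $v\ne w$, with $(v,w)$ or $(w,v)$ an edge). $\mathsf{MaxCliques}(F)$ is the set of maximal cliques; $\bigcap S$ is the intersection of the family $S$, with $\bigcap\emptyset=\emptyset$; $\varphi(A)$ is the image of $A$. $F$ is chordal if its underlying simple graph has no induced cycle of length $\ge4$. $F|_A$ is the induced subgraph on $A$ and $\mathsf{CC}$ its number of connected components, with $\mathsf{CC}(F|_\emptyset)=0$. For a finite set $V$ and $f:\wp(V)\to\mathbb R$, $L_Vf:\wp(V)\to\mathbb R$ is defined by $(L_Vf)(A)=\sum_{B\subseteq V:\,A\cup B=V} -(-1)^{|A\cap B|} f(B)$. *)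

theory Defs
  imports Complex_Main
begin

text \<open>A finite directed graph: a vertex set and an edge set (loops allowed).\<close>
type_synonym 'a graph = "'a set \<times> ('a \<times> 'a) set"

definition verts :: "'a graph \<Rightarrow> 'a set" where "verts G = fst G"
definition edges :: "'a graph \<Rightarrow> ('a \<times> 'a) set" where "edges G = snd G"

definition graph :: "'a graph \<Rightarrow> bool" where
  "graph G \<longleftrightarrow> finite (verts G) \<and> edges G \<subseteq> verts G \<times> verts G"

text \<open>Adjacency in the underlying simple undirected graph.\<close>
definition adj :: "'a graph \<Rightarrow> 'a \<Rightarrow> 'a \<Rightarrow> bool" where
  "adj G v w \<longleftrightarrow> v \<noteq> w \<and> ((v, w) \<in> edges G \<or> (w, v) \<in> edges G)"

definition clique :: "'a graph \<Rightarrow> 'a set \<Rightarrow> bool" where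
  "clique G C \<longleftrightarrow> C \<subseteq> verts G \<and> (\<forall>v\<in>C. \<forall>w\<in>C. v \<noteq> w \<longrightarrow> adj G v w)"

definition MaxCliques :: "'a graph \<Rightarrow> 'a set set" where
  "MaxCliques G = {C. clique G C \<and> (\<forall>D. clique G D \<and> C \<subseteq> D \<longrightarrow> D = C)}"

text \<open>Intersection of a family, with the convention that the empty family has empty intersection.\<close>
definition Inter0 :: "'a set set \<Rightarrow> 'a set" where
  "Inter0 S = (if S = {} then {} else \<Inter> S)"

text \<open>Chordal: no induced cycle of length \<ge> 4 in the underlying simple graph.\<close>
definition chordal :: "'a graph \<Rightarrow> bool" where
  "chordal G \<longleftrightarrow> \<not> (\<exists>cs. length cs \<ge> 4 \<and> distinct cs \<and> set cs \<subseteq> verts G \<and>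
      (\<forall>i < length cs. \<forall>j < length cs.
          adj G (cs ! i) (cs ! j) \<longleftrightarrow>
            (j = (i + 1) mod length cs \<or> i = (j + 1) mod length cs)))"

definition conn :: "'a graph \<Rightarrow> 'a set \<Rightarrow> ('a \<times> 'a) set" where
  "conn G A = (Id_on A \<union> {(x, y). x \<in> A \<and> y \<in> A \<and> adj G x y})\<^sup>+"

text \<open>Number of connected components of the induced subgraph on A (0 for A empty).\<close>
definition CC :: "'a graph \<Rightarrow> 'a set \<Rightarrow> nat" where
  "CC G A = card (A // conn G A)"

definition L :: "'a set \<Rightarrow> ('a set \<Rightarrow> real) \<Rightarrow> 'a set \<Rightarrow> real" where
  "L V f A = (\<Sum>B \<in> {B. B \<subseteq> V \<and> A \<union> B = V}. - ((-1) ^ card (A \<inter> B)) * f B)"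

definition hom :: "'a graph \<Rightarrow> 'b graph \<Rightarrow> ('a \<Rightarrow> 'b) \<Rightarrow> bool" where
  "hom F G \<phi> \<longleftrightarrow> (\<forall>v \<in> verts F. \<phi> v \<in> verts G) \<and>
     (\<forall>(v, w) \<in> edges F. (\<phi> v, \<phi> w) \<in> edges G)"

end

theory Submission
  imports Defs
begin

lemma adj_sym: "adj G v w \<longleftrightarrow> adj G w v" unfolding adj_def by auto
lemma adj_irrefl: "\<not> adj G v v" unfolding adj_def by auto

definition walk :: "'a graph \<Rightarrow> 'a set \<Rightarrow> 'a list \<Rightarrow> bool" where
  "walk G B p \<longleftrightarrow> set p \<subseteq> B \<and> (\<forall>i. Suc i < length p \<longrightarrow> adj G (p!i) (p!Suc i))"

lemma walk_Nil[simp]: "walk G B []" by (simp add: walk_def)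

lemma walk_Cons: "walk G B (a # q) \<longleftrightarrow> a \<in> B \<and> walk G B q \<and> (q \<noteq> [] \<longrightarrow> adj G a (hd q))"
proof
  assume w: "walk G B (a # q)"
  have "\<forall>i. Suc i < length q \<longrightarrow> adj G (q!i) (q!Suc i)"
  proof (intro allI impI)
    fix i assume "Suc i < length q"
    then have "Suc (Suc i) < length (a#q)" by simp
    with w show "adj G (q!i) (q!Suc i)" unfolding walk_def by fastforce
  qed
  moreover have "q \<noteq> [] \<longrightarrow> adj G a (hd q)"
    using w unfolding walk_def by (metis hd_conv_nth length_Cons length_greater_0_conv nth_Cons_0 nth_Cons_Suc Suc_less_eq)
  ultimately show "a \<in> B \<and> walk G B q \<and> (q \<noteq> [] \<longrightarrow> adj G a (hd q))"
    using w unfolding walk_def by auto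
next
  assume h: "a \<in> B \<and> walk G B q \<and> (q \<noteq> [] \<longrightarrow> adj G a (hd q))"
  show "walk G B (a # q)" unfolding walk_def
  proof (intro conjI allI impI)
    show "set (a # q) \<subseteq> B" using h unfolding walk_def by auto
  next
    fix i assume i: "Suc i < length (a # q)"
    show "adj G ((a # q) ! i) ((a # q) ! Suc i)"
    proof (cases i)
      case 0
      then show ?thesis using h i by (auto simp: hd_conv_nth)
    next
      case (Suc j)
      then show ?thesis using h i unfolding walk_def by auto
    qed
  qed
qed

lemma walk_append: "walk G B (xs @ ys) \<longleftrightarrow> walk G B xs \<and> walk G B ys \<and> (xs \<noteq> [] \<and> ys \<noteq> [] \<longrightarrow> adj G (last xs) (hd ys))"
  by (induction xs) (auto simp: walk_Cons)

lemma walk_take: "walk G B p \<Longrightarrow> walk G B (take n p)"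
proof -
  assume "walk G B p"
  then have "walk G B (take n p @ drop n p)" by simp
  then show ?thesis by (simp only: walk_append)
qed
lemma walk_drop: "walk G B p \<Longrightarrow> walk G B (drop n p)"
proof -
  assume "walk G B p"
  then have "walk G B (take n p @ drop n p)" by simp
  then show ?thesis by (simp only: walk_append)
qed
lemma walk_mono: "walk G B p \<Longrightarrow> B \<subseteq> B' \<Longrightarrow> walk G B' p"
  unfolding walk_def by auto
lemma walk_set: "walk G B p \<Longrightarrow> set p \<subseteq> B" unfolding walk_def by auto

lemma conn_walk: "(x, y) \<in> conn G B \<longleftrightarrow> (\<exists>p. walk G B p \<and> p \<noteq> [] \<and> hd p = x \<and> last p = y)"
proof
  assume "(x, y) \<in> conn G B"
  then show "\<exists>p. walk G B p \<and> p \<noteq> [] \<and> hd p = x \<and> last p = y"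
    unfolding conn_def
  proof (induction rule: trancl_induct)
    case (base y)
    then show ?case
    proof
      assume "(x, y) \<in> Id_on B"
      then show ?thesis by (intro exI[of _ "[x]"]) (auto simp: walk_Cons)
    next
      assume "(x, y) \<in> {(x, y). x \<in> B \<and> y \<in> B \<and> adj G x y}"
      then show ?thesis by (intro exI[of _ "[x,y]"]) (auto simp: walk_Cons)
    qed
  next
    case (step y z)
    then obtain p where p: "walk G B p" "p \<noteq> []" "hd p = x" "last p = y" by blast
    from step(2) show ?case
    proof
      assume "(y, z) \<in> Id_on B"
      then show ?thesis using p by auto
    next
      assume "(y, z) \<in> {(x, y). x \<in> B \<and> y \<in> B \<and> adj G x y}"
      then show ?thesis using p
        by (intro exI[of _ "p @ [z]"]) (auto simp: walk_append walk_Cons)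
    qed
  qed
next
  assume "\<exists>p. walk G B p \<and> p \<noteq> [] \<and> hd p = x \<and> last p = y"
  then obtain p where p: "walk G B p" "p \<noteq> []" "hd p = x" "last p = y" by blast
  then show "(x, y) \<in> conn G B"
  proof (induction p arbitrary: x)
    case Nil then show ?case by simp
  next
    case (Cons a q)
    show ?case
    proof (cases "q = []")
      case True
      then show ?thesis using Cons.prems unfolding conn_def by (auto simp: walk_Cons)
    next
      case False
      have IH: "(hd q, y) \<in> conn G B" using Cons False by (auto simp: walk_Cons)
      have "hd q \<in> B" using Cons.prems False by (auto simp: walk_Cons walk_def)
      then have "(a, hd q) \<in> conn G B" using Cons.prems False unfolding conn_def
        by (auto simp: walk_Cons)
      then show ?thesis using IH Cons.prems unfolding conn_def by auto
    qed
  qed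
qed

lemma conn_sub: "conn G B \<subseteq> B \<times> B"
  unfolding conn_def by (rule trancl_subset_Sigma) auto

lemma conn_refl: "x \<in> B \<Longrightarrow> (x, x) \<in> conn G B"
  unfolding conn_def by auto

lemma conn_adj: "x \<in> B \<Longrightarrow> y \<in> B \<Longrightarrow> adj G x y \<Longrightarrow> (x, y) \<in> conn G B"
  unfolding conn_def by auto

lemma conn_trans: "(x, y) \<in> conn G B \<Longrightarrow> (y, z) \<in> conn G B \<Longrightarrow> (x, z) \<in> conn G B"
  unfolding conn_def by auto

lemma conn_sym: "(x, y) \<in> conn G B \<Longrightarrow> (y, x) \<in> conn G B"
proof -
  have "sym (Id_on B \<union> {(x, y). x \<in> B \<and> y \<in> B \<and> adj G x y})"
    unfolding sym_def by (auto simp: adj_sym)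
  then have "sym (conn G B)" unfolding conn_def by (rule sym_trancl)
  then show "(x, y) \<in> conn G B \<Longrightarrow> (y, x) \<in> conn G B"
    by (rule symD)
qed

lemma conn_equiv: "equiv B (conn G B)"
proof (rule equivI)
  show "conn G B \<subseteq> B \<times> B" by (rule conn_sub)
  show "refl_on B (conn G B)" by (rule refl_onI) (rule conn_refl)
  show "sym (conn G B)" by (rule symI) (rule conn_sym)
  show "trans (conn G B)" by (rule transI) (rule conn_trans)
qed

lemma conn_mono: "B \<subseteq> B' \<Longrightarrow> conn G B \<subseteq> conn G B'"
proof
  fix z assume BB: "B \<subseteq> B'" and z: "z \<in> conn G B"
  obtain x y where xy: "z = (x, y)" by (cases z)
  with z obtain p where "walk G B p \<and> p \<noteq> [] \<and> hd p = x \<and> last p = y" using conn_walk by metis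
  then have "walk G B' p \<and> p \<noteq> [] \<and> hd p = x \<and> last p = y" using BB walk_mono by blast
  then show "z \<in> conn G B'" using xy conn_walk by metis
qed

lemma walk_adj: "walk G B p \<Longrightarrow> Suc i < length p \<Longrightarrow> adj G (p!i) (p!Suc i)"
  unfolding walk_def by auto

lemma last_take_Suc: "n < length p \<Longrightarrow> last (take (Suc n) p) = p!n"
  by (simp add: take_Suc_conv_app_nth)

lemma walk_shortcut:
  assumes w: "walk G B p" and ij: "i < j" "j < length p"
    and c: "p!i = p!j \<or> (adj G (p!i) (p!j) \<and> Suc i < j)"
  shows "\<exists>q. walk G B q \<and> q \<noteq> [] \<and> hd q = hd p \<and> last q = last p \<and> length q < length p"
  using c
proof
  assume eq: "p!i = p!j"
  show ?thesis
  proof (cases i)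
    case 0
    have "hd (drop j p) = p!j" using ij by (simp add: hd_drop_conv_nth)
    moreover have "hd p = p!0" using ij by (cases p) auto
    ultimately show ?thesis using 0 eq ij w
      by (intro exI[of _ "drop j p"]) (auto simp: walk_drop)
  next
    case (Suc i')
    let ?q = "take i p @ drop j p"
    have l: "last (take i p) = p!i'" using Suc ij by (simp add: last_take_Suc)
    have h: "hd (drop j p) = p!j" using ij by (simp add: hd_drop_conv_nth)
    have a: "adj G (p!i') (p!i)" using walk_adj[OF w, of i'] Suc ij by simp
    have "walk G B ?q" unfolding walk_append using walk_take[OF w] walk_drop[OF w] l h a eq by simp
    moreover have "hd ?q = hd p" using Suc ij by (cases p) auto
    moreover have "last ?q = last p" using ij by simp
    moreover have "length ?q < length p" using ij Suc by simp
    ultimately show ?thesis using ij by (intro exI[of _ ?q]) simp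
  qed
next
  assume a: "adj G (p!i) (p!j) \<and> Suc i < j"
  let ?q = "take (Suc i) p @ drop j p"
  have l: "last (take (Suc i) p) = p!i" using ij by (simp add: last_take_Suc)
  have h: "hd (drop j p) = p!j" using ij by (simp add: hd_drop_conv_nth)
  have "walk G B ?q" unfolding walk_append using walk_take[OF w] walk_drop[OF w] l h a by simp
  moreover have "hd ?q = hd p" using ij by (cases p) auto
  moreover have "last ?q = last p" using ij by simp
  moreover have "length ?q < length p" using ij a by auto
  ultimately show ?thesis using ij by (intro exI[of _ ?q]) simp
qed

lemma chordal_nbr:
  fixes F :: "'a graph"
  assumes ch: "chordal F" and AV: "A \<subseteq> verts F" and vA: "v \<in> A"
    and N_def: "N = {w \<in> A - {v}. adj F v w}"
    and xN: "x \<in> N" and yN: "y \<in> N" and xy: "(x, y) \<in> conn F (A - {v})"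
  shows "(x, y) \<in> conn F N"
proof (rule ccontr)
  assume nxy: "(x,y) \<notin> conn F N"
  define A' where "A' = A - {v}"
  define P where "P n \<longleftrightarrow> (\<exists>p. walk F A' p \<and> p \<noteq> [] \<and> hd p \<in> N \<and> last p \<in> N \<and> (hd p, last p) \<notin> conn F N \<and> length p = n)" for n
  obtain p0 where "walk F A' p0 \<and> p0 \<noteq> [] \<and> hd p0 = x \<and> last p0 = y"
    using xy conn_walk unfolding A'_def by metis
  then have "P (length p0)" using xN yN nxy unfolding P_def by blast
  then have "P (LEAST n. P n)" by (rule LeastI)
  then obtain p where p: "walk F A' p" "p \<noteq> []" "hd p \<in> N" "last p \<in> N" "(hd p, last p) \<notin> conn F N"
    and lp: "length p = (LEAST n. P n)" unfolding P_def by blast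
  have min: "length p \<le> length q" if "walk F A' q" "q \<noteq> []" "hd q \<in> N" "last q \<in> N" "(hd q, last q) \<notin> conn F N" for q
  proof -
    have "P (length q)" using that unfolding P_def by blast
    then show ?thesis unfolding lp by (rule Least_le)
  qed
  have F1: "p!i \<noteq> p!j \<and> (adj F (p!i) (p!j) \<longrightarrow> j = Suc i)" if ij: "i < j" "j < length p" for i j
  proof (rule ccontr)
    assume "\<not> ?thesis"
    then have "p!i = p!j \<or> (adj F (p!i) (p!j) \<and> Suc i < j)" using ij by auto
    then obtain q where "walk F A' q \<and> q \<noteq> [] \<and> hd q = hd p \<and> last q = last p \<and> length q < length p"
      using walk_shortcut[OF p(1) ij] by blast
    then show False using min[of q] p by force
  qed
  have pA: "set p \<subseteq> A'" using p(1) walk_set by blast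
  have F2: "p!i \<notin> N" if "0 < i" "Suc i < length p" for i
  proof
    assume iN: "p!i \<in> N"
    have il: "i < length p" using that by simp
    show False
    proof (cases "(hd p, p!i) \<in> conn F N")
      case True
      have c: "(p!i, last p) \<notin> conn F N"
      proof
        assume "(p!i, last p) \<in> conn F N"
        then have "(hd p, last p) \<in> conn F N" by (rule conn_trans[OF True])
        then show False using p(5) by simp
      qed
      have w: "walk F A' (drop i p)" using p(1) walk_drop by blast
      have h: "hd (drop i p) = p!i" using il by (simp add: hd_drop_conv_nth)
      have l: "last (drop i p) = last p" using il by simp
      have ne: "drop i p \<noteq> []" using il by simp
      have h1: "hd (drop i p) \<in> N" using h iN by simp
      have l1: "last (drop i p) \<in> N" using l p(4) by simp
      have c1: "(hd (drop i p), last (drop i p)) \<notin> conn F N" using c h l by simp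
      have "length p \<le> length (drop i p)" by (rule min[OF w ne h1 l1 c1])
      then show False using that by simp
    next
      case False
      have w: "walk F A' (take (Suc i) p)" using p(1) walk_take by blast
      have h: "hd (take (Suc i) p) = hd p" using il by (cases p) auto
      have l: "last (take (Suc i) p) = p!i" using il by (simp add: last_take_Suc)
      have ne: "take (Suc i) p \<noteq> []" using il by (cases p) auto
      have h1: "hd (take (Suc i) p) \<in> N" using h p(3) by simp
      have l1: "last (take (Suc i) p) \<in> N" using l iN by simp
      have c1: "(hd (take (Suc i) p), last (take (Suc i) p)) \<notin> conn F N" using False h l by simp
      have "length p \<le> length (take (Suc i) p)" by (rule min[OF w ne h1 l1 c1])
      then show False using that by simp
    qed
  qed
  define n where "n = length p"
  have h0: "hd p = p!0" using p(2) by (cases p) auto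
  have hl: "last p = p!(n-1)" using p(2) unfolding n_def by (simp add: last_conv_nth)
  have n2: "n \<ge> 2"
  proof (rule ccontr)
    assume a: "\<not> n \<ge> 2"
    have "n > 0" using p(2) unfolding n_def by simp
    then have "n = 1" using a by simp
    then have "hd p = last p" using h0 hl by simp
    then have "(hd p, last p) \<in> conn F N" using p(3) conn_refl by simp
    then show False using p(5) by simp
  qed
  have n3: "n \<ge> 3"
  proof (rule ccontr)
    assume "\<not> n \<ge> 3"
    then have "n = 2" using n2 by simp
    then have "adj F (hd p) (last p)" using walk_adj[OF p(1), of 0] h0 hl unfolding n_def by simp
    then have "(hd p, last p) \<in> conn F N" using p(3,4) by (intro conn_adj)
    then show False using p(5) by simp
  qed
  have Nchar: "adj F v (p!t) \<longleftrightarrow> (t = 0 \<or> t = n - 1)" if "t < n" for t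
  proof -
    have "p!t \<in> A'" using pA that unfolding n_def by auto
    then have "adj F v (p!t) \<longleftrightarrow> p!t \<in> N" unfolding N_def A'_def by auto
    also have "\<dots> \<longleftrightarrow> (t = 0 \<or> t = n - 1)"
    proof (cases "t = 0 \<or> t = n - 1")
      case True then show ?thesis using p(3,4) h0 hl by auto
    next
      case False
      then have "0 < t" "Suc t < length p" using that unfolding n_def by auto
      then have "p!t \<notin> N" by (rule F2)
      then show ?thesis using False by simp
    qed
    finally show ?thesis .
  qed
  have Pchar: "adj F (p!a) (p!b) \<longleftrightarrow> (b = Suc a \<or> a = Suc b)" if "a < n" "b < n" for a b
  proof
    assume ad: "adj F (p!a) (p!b)"
    consider "a < b" | "a = b" | "b < a" by arith
    then show "b = Suc a \<or> a = Suc b"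
    proof cases
      case 1 then show ?thesis using F1[of a b] ad that unfolding n_def by auto
    next
      case 2 then show ?thesis using ad adj_irrefl by metis
    next
      case 3 then show ?thesis using F1[of b a] ad adj_sym that unfolding n_def by metis
    qed
  next
    assume "b = Suc a \<or> a = Suc b"
    then show "adj F (p!a) (p!b)"
    proof
      assume "b = Suc a" then show ?thesis using walk_adj[OF p(1), of a] that unfolding n_def by simp
    next
      assume "a = Suc b" then show ?thesis using walk_adj[OF p(1), of b] that adj_sym[of F] unfolding n_def by simp
    qed
  qed
  define cs where "cs = v # p"
  have lcs: "length cs = Suc n" unfolding cs_def n_def by simp
  have "distinct p" unfolding distinct_conv_nth
  proof (intro allI impI)
    fix i j assume "i < length p" "j < length p" "i \<noteq> j"
    then show "p!i \<noteq> p!j" using F1[of i j] F1[of j i] by (cases "i < j") auto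
  qed
  moreover have "v \<notin> set p" using pA unfolding A'_def by auto
  ultimately have dcs: "distinct cs" unfolding cs_def by simp
  have scs: "set cs \<subseteq> verts F" using pA vA AV unfolding cs_def A'_def by auto
  have md: "(k + 1) mod Suc n = (if k = n then 0 else k + 1)" if "k < Suc n" for k
    using that by auto
  have acs: "\<forall>i < length cs. \<forall>j < length cs. adj F (cs ! i) (cs ! j) \<longleftrightarrow>
            (j = (i + 1) mod length cs \<or> i = (j + 1) mod length cs)"
  proof (intro allI impI)
    fix i j assume i: "i < length cs" and j: "j < length cs"
    have mi: "(i + 1) mod length cs = (if i = n then 0 else i + 1)" using md i lcs by simp
    have mj: "(j + 1) mod length cs = (if j = n then 0 else j + 1)" using md j lcs by simp
    have c0: "cs!0 = v" by (simp add: cs_def)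
    have cS: "cs!Suc k = p!k" for k by (simp add: cs_def)
    have "adj F (cs ! i) (cs ! j) \<longleftrightarrow> (j = (if i = n then 0 else i + 1) \<or> i = (if j = n then 0 else j + 1))"
    proof (cases i)
      case 0
      then show ?thesis
      proof (cases j)
        case 0 then show ?thesis using \<open>i = 0\<close> n3 adj_irrefl[of F v] c0 by simp
      next
        case (Suc j')
        then have "j' < n" using j lcs by simp
        then show ?thesis using \<open>i = 0\<close> Suc Nchar[of j'] n3 c0 cS by auto
      qed
    next
      case (Suc i')
      then have i': "i' < n" using i lcs by simp
      show ?thesis
      proof (cases j)
        case 0 then show ?thesis using Suc i' Nchar[of i'] n3 adj_sym[of F v] c0 cS by auto
      next
        case (Suc j')
        then have "j' < n" using j lcs by simp
        then show ?thesis using \<open>i = Suc i'\<close> Suc i' Pchar[of i' j'] n3 cS by auto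
      qed
    qed
    then show "adj F (cs ! i) (cs ! j) \<longleftrightarrow> (j = (i + 1) mod length cs \<or> i = (j + 1) mod length cs)"
      unfolding mi mj .
  qed
  have l4: "length cs \<ge> 4" using lcs n3 by simp
  show False using ch l4 dcs scs acs unfolding chordal_def by blast
qed

lemma card_img_eq:
  assumes "\<forall>x\<in>N. \<forall>y\<in>N. f x = f y \<longleftrightarrow> g x = g y"
  shows "card (f ` N) = card (g ` N)"
proof -
  define h where "h K = g (inv_into N f K)" for K
  have hf: "h (f x) = g x" if "x \<in> N" for x
  proof -
    have "inv_into N f (f x) \<in> N" using that by (simp add: inv_into_into)
    moreover have "f (inv_into N f (f x)) = f x" using that by (simp add: f_inv_into_f)
    ultimately show ?thesis unfolding h_def using assms that by blast
  qed
  have "h ` (f ` N) = g ` N" using hf by (auto simp: image_image)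
  moreover have "inj_on h (f ` N)"
  proof (rule inj_onI)
    fix K1 K2 assume "K1 \<in> f ` N" "K2 \<in> f ` N" "h K1 = h K2"
    then obtain x y where "x \<in> N" "y \<in> N" "K1 = f x" "K2 = f y" "h (f x) = h (f y)" by blast
    then show "K1 = K2" using hf assms by metis
  qed
  ultimately show ?thesis by (metis card_image)
qed

lemma quotient_image: "B // r = (\<lambda>x. r``{x}) ` B"
  unfolding quotient_def by auto

lemma walk_hit:
  assumes "walk F A p" "p \<noteq> []" "hd p \<in> A - {v}" "v \<in> set p"
  shows "\<exists>n \<in> {w \<in> A - {v}. adj F v w}. (hd p, n) \<in> conn F (A - {v})"
  using assms
proof (induction p)
  case Nil then show ?case by simp
next
  case (Cons a q)
  have aA: "a \<in> A - {v}" using Cons.prems by simp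
  have qne: "q \<noteq> []" using Cons.prems by auto
  have wq: "walk F A q" and adq: "adj F a (hd q)" using Cons.prems(1) qne by (auto simp: walk_Cons)
  show ?case
  proof (cases "hd q = v")
    case True
    then have "a \<in> {w \<in> A - {v}. adj F v w}" using aA adq adj_sym[of F] by auto
    moreover have "(a, a) \<in> conn F (A - {v})" using aA by (rule conn_refl)
    ultimately show ?thesis by auto
  next
    case False
    have hqA: "hd q \<in> A" using wq qne walk_set[OF wq] by (auto simp: hd_in_set subset_iff)
    then have hq: "hd q \<in> A - {v}" using False by simp
    have "v \<in> set q" using Cons.prems aA by auto
    then obtain n where n: "n \<in> {w \<in> A - {v}. adj F v w}" "(hd q, n) \<in> conn F (A - {v})"
      using Cons.IH[OF wq qne hq] by blast
    have "(a, hd q) \<in> conn F (A - {v})" using aA hq adq by (rule conn_adj)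
    then have "(a, n) \<in> conn F (A - {v})" using n(2) by (rule conn_trans)
    then show ?thesis using n(1) by auto
  qed
qed

lemma walk_avoid: "walk F A p \<Longrightarrow> v \<notin> set p \<Longrightarrow> walk F (A - {v}) p"
  unfolding walk_def by auto

lemma CC_step:
  fixes F :: "'a graph"
  assumes ch: "chordal F" and AV: "A \<subseteq> verts F" and fin: "finite A" and vA: "v \<in> A"
  defines "A' \<equiv> A - {v}" and "N \<equiv> {w \<in> A - {v}. adj F v w}"
  shows "real (CC F A) = real (CC F A') + 1 - real (CC F N)"
proof -
  define R where "R = conn F A"
  define R' where "R' = conn F A'"
  define RN where "RN = conn F N"
  have eR: "equiv A R" unfolding R_def by (rule conn_equiv)
  have eR': "equiv A' R'" unfolding R'_def by (rule conn_equiv)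
  have eRN: "equiv N RN" unfolding RN_def by (rule conn_equiv)
  have NA': "N \<subseteq> A'" unfolding N_def A'_def by auto
  have A'A: "A' \<subseteq> A" unfolding A'_def by auto
  have R'R: "R' \<subseteq> R" unfolding R_def R'_def using A'A by (rule conn_mono)
  have RNR': "RN \<subseteq> R'" unfolding RN_def R'_def using NA' by (rule conn_mono)
  define E where "E = A' // R'"
  define Q where "Q = {K \<in> E. K \<inter> N \<noteq> {}}"
  have finA': "finite A'" using fin A'A finite_subset by blast
  have finE: "finite E" unfolding E_def using finA' conn_sub[of F A'] unfolding R'_def
    by (intro finite_quotient)
  have Q1: "Q = (\<lambda>n. R'``{n}) ` N"
  proof
    show "Q \<subseteq> (\<lambda>n. R'``{n}) ` N"
    proof
      fix K assume "K \<in> Q"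
      then obtain x n where x: "x \<in> A'" "K = R'``{x}" and n: "n \<in> K" "n \<in> N"
        unfolding Q_def E_def by (auto elim!: quotientE)
      then have "(x, n) \<in> R'" by simp
      then have "R'``{x} = R'``{n}" by (rule equiv_class_eq[OF eR'])
      then show "K \<in> (\<lambda>n. R'``{n}) ` N" using x n by auto
    qed
  next
    show "(\<lambda>n. R'``{n}) ` N \<subseteq> Q"
    proof
      fix K assume "K \<in> (\<lambda>n. R'``{n}) ` N"
      then obtain n where n: "n \<in> N" "K = R'``{n}" by auto
      then have "n \<in> A'" using NA' by auto
      then have "K \<in> E" "n \<in> K" using n equiv_class_self[OF eR'] unfolding E_def by (auto intro: quotientI)
      then show "K \<in> Q" unfolding Q_def using n by auto
    qed
  qed
  have chn: "(x, y) \<in> RN" if "x \<in> N" "y \<in> N" "(x, y) \<in> R'" for x y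
    using chordal_nbr[OF ch AV vA N_def[THEN meta_eq_to_obj_eq] that(1,2)] that(3) unfolding RN_def R'_def A'_def by simp
  have Q2: "card Q = CC F N"
  proof -
    have "card ((\<lambda>n. RN``{n}) ` N) = card ((\<lambda>n. R'``{n}) ` N)"
    proof (rule card_img_eq, intro ballI)
      fix x y assume xy: "x \<in> N" "y \<in> N"
      then have "x \<in> A'" "y \<in> A'" using NA' by auto
      have "RN``{x} = RN``{y} \<longleftrightarrow> (x, y) \<in> RN" using eRN xy by (rule eq_equiv_class_iff)
      also have "\<dots> \<longleftrightarrow> (x, y) \<in> R'" using chn xy RNR' by blast
      also have "\<dots> \<longleftrightarrow> R'``{x} = R'``{y}" using eR' \<open>x \<in> A'\<close> \<open>y \<in> A'\<close> by (rule eq_equiv_class_iff[symmetric])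
      finally show "RN``{x} = RN``{y} \<longleftrightarrow> R'``{x} = R'``{y}" .
    qed
    then show ?thesis unfolding Q1 CC_def RN_def quotient_image by simp
  qed
  have K1: "R``{x} = R'``{x} \<and> v \<notin> R``{x}" if x: "x \<in> A'" "R'``{x} \<inter> N = {}" for x
  proof -
    have sub: "(x, y) \<in> R'" if yR: "(x, y) \<in> R" for y
    proof -
      obtain p where p: "walk F A p" "p \<noteq> []" "hd p = x" "last p = y"
        using yR unfolding R_def conn_walk by blast
      show ?thesis
      proof (cases "v \<in> set p")
        case True
        have "hd p \<in> A - {v}" using p(3) x(1) unfolding A'_def by simp
        from walk_hit[OF p(1,2) this True] obtain n where "n \<in> N" "(hd p, n) \<in> R'"
          unfolding N_def A'_def R'_def by blast
        then have "n \<in> R'``{x} \<inter> N" using p(3) by simp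
        then show ?thesis using x(2) by simp
      next
        case False
        have "walk F A' p" unfolding A'_def by (rule walk_avoid[OF p(1) False])
        then show ?thesis using p unfolding R'_def conn_walk by blast
      qed
    qed
    have s1: "R``{x} \<subseteq> R'``{x}" using sub by blast
    have s2: "R'``{x} \<subseteq> R``{x}" using R'R by blast
    have "v \<notin> R'``{x}" using conn_sub[of F A'] unfolding R'_def A'_def by blast
    moreover have "R``{x} = R'``{x}" using s1 s2 by (rule equalityI)
    ultimately show ?thesis by simp
  qed
  have K2: "R``{x} = R``{v}" if x: "x \<in> A'" "n \<in> R'``{x}" "n \<in> N" for x n
  proof -
    have "(x, n) \<in> R" using x R'R by auto
    moreover have "(n, v) \<in> R" unfolding R_def using x(3) vA adj_sym[of F] unfolding N_def
      by (intro conn_adj) auto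
    ultimately have "(x, v) \<in> R" unfolding R_def by (rule conn_trans)
    then show ?thesis by (rule equiv_class_eq[OF eR])
  qed
  have Q3: "A // R = insert (R``{v}) (E - Q)"
  proof
    show "A // R \<subseteq> insert (R``{v}) (E - Q)"
    proof
      fix K assume "K \<in> A // R"
      then obtain x where x: "x \<in> A" "K = R``{x}" by (auto elim!: quotientE)
      show "K \<in> insert (R``{v}) (E - Q)"
      proof (cases "x = v")
        case True then show ?thesis using x by simp
      next
        case False
        then have xA': "x \<in> A'" using x unfolding A'_def by simp
        show ?thesis
        proof (cases "R'``{x} \<inter> N = {}")
          case True
          then have "K = R'``{x}" using K1[OF xA'] x by simp
          moreover have "R'``{x} \<in> E" unfolding E_def using xA' by (rule quotientI)
          ultimately show ?thesis using True unfolding Q_def by auto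
        next
          case False
          then obtain n where "n \<in> R'``{x}" "n \<in> N" by auto
          then show ?thesis using K2[OF xA'] x by simp
        qed
      qed
    qed
  next
    show "insert (R``{v}) (E - Q) \<subseteq> A // R"
    proof
      fix K assume K: "K \<in> insert (R``{v}) (E - Q)"
      show "K \<in> A // R"
      proof (cases "K = R``{v}")
        case True then show ?thesis using vA by (simp add: quotientI)
      next
        case False
        then have "K \<in> E" "K \<inter> N = {}" using K unfolding Q_def by auto
        then obtain x where x: "x \<in> A'" "K = R'``{x}" "R'``{x} \<inter> N = {}" unfolding E_def
          by (auto elim!: quotientE)
        then have "K = R``{x}" using K1 by simp
        then show ?thesis using x(1) A'A by (auto intro: quotientI)
      qed
    qed
  qed
  have notin: "R``{v} \<notin> E - Q"
  proof
    assume "R``{v} \<in> E - Q"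
    then obtain x where "x \<in> A'" "R``{v} = R'``{x}" unfolding E_def by (auto elim!: quotientE)
    moreover have "v \<in> R``{v}" using eR vA by (rule equiv_class_self)
    ultimately have "v \<in> R'``{x}" by simp
    then show False using conn_sub[of F A'] unfolding R'_def A'_def by auto
  qed
  have QE: "Q \<subseteq> E" unfolding Q_def by auto
  have "CC F A = Suc (card (E - Q))" unfolding CC_def R_def[symmetric] Q3
    using notin finE by simp
  moreover have "card (E - Q) = card E - card Q" using QE finE by (simp add: card_Diff_subset finite_subset)
  moreover have "card Q \<le> card E" using QE finE by (simp add: card_mono)
  moreover have "CC F A' = card E" unfolding CC_def E_def R'_def ..
  ultimately show ?thesis using Q2 by simp
qed

lemma sum_Pow_insert:
  assumes "finite X" "x \<notin> X"
  shows "(\<Sum>\<sigma>\<in>Pow (insert x X). f \<sigma>) = (\<Sum>\<sigma>\<in>Pow X. f \<sigma>) + (\<Sum>\<sigma>\<in>Pow X. f (insert x \<sigma>))"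
proof -
  have inj: "inj_on (insert x) (Pow X)"
  proof (rule inj_onI)
    fix a b assume "a \<in> Pow X" "b \<in> Pow X" "insert x a = insert x b"
    moreover have "x \<notin> a" "x \<notin> b" using assms(2) calculation by auto
    ultimately show "a = b" by (simp add: insert_ident)
  qed
  have disj: "Pow X \<inter> insert x ` Pow X = {}" using assms(2) by auto
  have "(\<Sum>\<sigma>\<in>Pow (insert x X). f \<sigma>) = (\<Sum>\<sigma>\<in>Pow X \<union> insert x ` Pow X. f \<sigma>)"
    by (simp add: Pow_insert)
  also have "\<dots> = (\<Sum>\<sigma>\<in>Pow X. f \<sigma>) + (\<Sum>\<sigma>\<in>insert x ` Pow X. f \<sigma>)"
    using assms(1) disj by (intro sum.union_disjoint) auto
  also have "(\<Sum>\<sigma>\<in>insert x ` Pow X. f \<sigma>) = (\<Sum>\<sigma>\<in>Pow X. f (insert x \<sigma>))"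
    using inj by (simp add: sum.reindex)
  finally show ?thesis .
qed

lemma alt_sum_Pow:
  assumes "finite X"
  shows "(\<Sum>\<sigma>\<in>Pow X. (-1::real) ^ card \<sigma>) = (if X = {} then 1 else 0)"
  using assms
proof (induction X rule: finite_induct)
  case empty then show ?case by simp
next
  case (insert x X)
  have "(\<Sum>\<sigma>\<in>Pow X. (-1::real) ^ card (insert x \<sigma>)) = (\<Sum>\<sigma>\<in>Pow X. - ((-1::real) ^ card \<sigma>))"
  proof (rule sum.cong)
    fix \<sigma> assume "\<sigma> \<in> Pow X"
    then have "finite \<sigma>" "x \<notin> \<sigma>" using insert finite_subset by auto
    then show "(-1::real) ^ card (insert x \<sigma>) = - ((-1) ^ card \<sigma>)" by simp
  qed simp
  then show ?case using sum_Pow_insert[OF insert(1,2), of "\<lambda>\<sigma>. (-1::real) ^ card \<sigma>"]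
    by (simp add: sum_negf)
qed

definition chi :: "'a graph \<Rightarrow> 'a set \<Rightarrow> real" where
  "chi F A = (\<Sum>\<sigma>\<in>Pow A. if \<sigma> \<noteq> {} \<and> clique F \<sigma> then - ((-1) ^ card \<sigma>) else 0)"

lemma chi_step:
  fixes F :: "'a graph"
  assumes AV: "A \<subseteq> verts F" and fin: "finite A" and vA: "v \<in> A"
  shows "chi F A = chi F (A - {v}) + 1 - chi F {w \<in> A - {v}. adj F v w}"
proof -
  define A' where "A' = A - {v}"
  define N where "N = {w \<in> A - {v}. adj F v w}"
  have AA: "A = insert v A'" "v \<notin> A'" using vA unfolding A'_def by auto
  have finA': "finite A'" using fin unfolding A'_def by simp
  have NA: "N \<subseteq> A'" unfolding N_def A'_def by auto
  have finN: "finite N" using finA' NA finite_subset by blast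
  define g where "g \<sigma> = (if \<sigma> \<noteq> {} \<and> clique F \<sigma> then - ((-1::real) ^ card \<sigma>) else 0)" for \<sigma>
  have "chi F A = (\<Sum>\<sigma>\<in>Pow A'. g \<sigma>) + (\<Sum>\<sigma>\<in>Pow A'. g (insert v \<sigma>))"
    unfolding chi_def g_def[symmetric] AA(1) by (rule sum_Pow_insert[OF finA' AA(2)])
  also have "(\<Sum>\<sigma>\<in>Pow A'. g \<sigma>) = chi F A'" unfolding chi_def g_def ..
  also have "(\<Sum>\<sigma>\<in>Pow A'. g (insert v \<sigma>)) = (\<Sum>\<tau>\<in>Pow A'. if clique F \<tau> \<and> \<tau> \<subseteq> N then (-1) ^ card \<tau> else 0)"
  proof (rule sum.cong)
    fix \<tau> assume "\<tau> \<in> Pow A'"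
    then have t: "\<tau> \<subseteq> A'" "finite \<tau>" "v \<notin> \<tau>" using finA' AA(2) finite_subset by auto
    have "clique F (insert v \<tau>) \<longleftrightarrow> clique F \<tau> \<and> \<tau> \<subseteq> N"
    proof
      assume c: "clique F (insert v \<tau>)"
      have "clique F \<tau>" using c unfolding clique_def by blast
      moreover have "\<tau> \<subseteq> N"
      proof
        fix w assume w: "w \<in> \<tau>"
        then have "w \<noteq> v" using t by blast
        have cc: "\<forall>a\<in>insert v \<tau>. \<forall>b\<in>insert v \<tau>. a \<noteq> b \<longrightarrow> adj F a b"
          using c unfolding clique_def by blast
        have "adj F v w" using cc[rule_format, OF insertI1 insertI2[OF w]] \<open>w \<noteq> v\<close> by simp
        then show "w \<in> N" using w t unfolding N_def A'_def by blast
      qed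
      ultimately show "clique F \<tau> \<and> \<tau> \<subseteq> N" by blast
    next
      assume c: "clique F \<tau> \<and> \<tau> \<subseteq> N"
      have s: "insert v \<tau> \<subseteq> verts F" using c vA AV unfolding clique_def by blast
      have "\<forall>a\<in>insert v \<tau>. \<forall>b\<in>insert v \<tau>. a \<noteq> b \<longrightarrow> adj F a b"
      proof (intro ballI impI)
        fix a b assume ab: "a \<in> insert v \<tau>" "b \<in> insert v \<tau>" "a \<noteq> b"
        have nb: "adj F v w" if "w \<in> \<tau>" for w using c that unfolding N_def by blast
        show "adj F a b"
        proof (cases "a = v")
          case True then show ?thesis using ab nb by blast
        next
          case False
          note aF = False
          show ?thesis
          proof (cases "b = v")
            case True then show ?thesis using ab aF nb adj_sym[of F a v] by blast
          next
            case False then show ?thesis using ab aF c unfolding clique_def by blast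
          qed
        qed
      qed
      then show "clique F (insert v \<tau>)" using s unfolding clique_def by blast
    qed
    then show "g (insert v \<tau>) = (if clique F \<tau> \<and> \<tau> \<subseteq> N then (-1) ^ card \<tau> else 0)"
      unfolding g_def using t by simp
  qed simp
  also have "\<dots> = (\<Sum>\<tau>\<in>Pow N. if clique F \<tau> then (-1) ^ card \<tau> else 0)"
  proof -
    have "(\<Sum>\<tau>\<in>Pow A'. if clique F \<tau> \<and> \<tau> \<subseteq> N then (-1::real) ^ card \<tau> else 0)
        = (\<Sum>\<tau>\<in>Pow N. if clique F \<tau> \<and> \<tau> \<subseteq> N then (-1) ^ card \<tau> else 0)"
    proof (rule sum.mono_neutral_right)
      show "finite (Pow A')" using finA' by simp
      show "Pow N \<subseteq> Pow A'" using NA by blast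
      show "\<forall>i\<in>Pow A' - Pow N. (if clique F i \<and> i \<subseteq> N then (-1::real) ^ card i else 0) = 0" by auto
    qed
    also have "\<dots> = (\<Sum>\<tau>\<in>Pow N. if clique F \<tau> then (-1) ^ card \<tau> else 0)"
      by (rule sum.cong) auto
    finally show ?thesis .
  qed
  also have "\<dots> = (\<Sum>\<tau>\<in>Pow N. (if \<tau> = {} then 1 else 0) - (if \<tau> \<noteq> {} \<and> clique F \<tau> then - ((-1::real) ^ card \<tau>) else 0))"
  proof (rule sum.cong)
    fix \<tau> assume "\<tau> \<in> Pow N"
    show "(if clique F \<tau> then (-1::real) ^ card \<tau> else 0) = (if \<tau> = {} then 1 else 0) - (if \<tau> \<noteq> {} \<and> clique F \<tau> then - ((-1::real) ^ card \<tau>) else 0)"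
      by (cases "\<tau> = {}") (auto simp: clique_def)
  qed simp
  also have "\<dots> = 1 - chi F N"
    unfolding chi_def using finN by (simp add: sum_subtractf)
  finally have "chi F A = chi F A' + 1 - chi F N" by simp
  then show ?thesis by (simp only: A'_def N_def)
qed

lemma CC_chi:
  fixes F :: "'a graph"
  assumes ch: "chordal F"
  shows "A \<subseteq> verts F \<Longrightarrow> finite A \<Longrightarrow> real (CC F A) = chi F A"
proof (induction "card A" arbitrary: A rule: less_induct)
  case less
  show ?case
  proof (cases "A = {}")
    case True
    then show ?thesis by (simp add: CC_def chi_def)
  next
    case False
    then obtain v where vA: "v \<in> A" by blast
    define A' where "A' = A - {v}"
    define N where "N = {w \<in> A - {v}. adj F v w}"
    have A'A: "A' \<subseteq> A" "finite A'" using less.prems unfolding A'_def by auto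
    have NA: "N \<subseteq> A" "finite N" using less.prems unfolding N_def by auto
    have "card A > 0" using less.prems(2) vA card_gt_0_iff by blast
    then have c1: "card A' < card A" using vA less.prems unfolding A'_def by simp
    have c2: "card N < card A"
    proof -
      have "N \<subseteq> A'" unfolding N_def A'_def by auto
      then have "card N \<le> card A'" using A'A by (simp add: card_mono)
      then show ?thesis using c1 by simp
    qed
    have IH1: "real (CC F A') = chi F A'" using less.hyps[OF c1] A'A less.prems by auto
    have IH2: "real (CC F N) = chi F N" using less.hyps[OF c2] NA less.prems by auto
    show ?thesis
      using CC_step[OF ch less.prems vA] chi_step[OF less.prems vA] IH1 IH2
      unfolding A'_def N_def by simp
  qed
qed

lemma alt_sum_Pow_ne:
  assumes "finite X"
  shows "(\<Sum>\<sigma>\<in>Pow X. if \<sigma> \<noteq> {} then - ((-1::real) ^ card \<sigma>) else 0) = (if X = {} then 0 else 1)"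
proof -
  have "(\<Sum>\<sigma>\<in>Pow X. if \<sigma> \<noteq> {} then - ((-1::real) ^ card \<sigma>) else 0)
      = (\<Sum>\<sigma>\<in>Pow X. (if \<sigma> = {} then 1 else 0) - (-1::real) ^ card \<sigma>)"
    by (rule sum.cong) auto
  also have "\<dots> = 1 - (if X = {} then 1 else 0)"
    using assms by (simp add: sum_subtractf alt_sum_Pow)
  finally show ?thesis by simp
qed

lemma alt_sum_Pow_minus:
  assumes "finite X"
  shows "(\<Sum>S\<in>Pow X - {{}}. - ((-1::real) ^ card S)) = (if X = {} then 0 else 1)"
proof -
  have "(\<Sum>S\<in>Pow X - {{}}. - ((-1::real) ^ card S)) = (\<Sum>\<sigma>\<in>Pow X. if \<sigma> \<noteq> {} then - ((-1::real) ^ card \<sigma>) else 0)"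
    using assms by (simp add: sum.inter_filter[symmetric] Diff_eq Collect_conj_eq[symmetric]) (rule sum.cong, auto)
  then show ?thesis using alt_sum_Pow_ne[OF assms] by simp
qed

lemma ext_max:
  assumes g: "graph F" and c: "clique F \<sigma>"
  shows "\<exists>C\<in>MaxCliques F. \<sigma> \<subseteq> C"
proof -
  define S where "S = {D. clique F D \<and> \<sigma> \<subseteq> D}"
  have finV: "finite (verts F)" using g unfolding graph_def by simp
  have SP: "S \<subseteq> Pow (verts F)" unfolding S_def clique_def by auto
  have finS: "finite S" using finV SP finite_subset by blast
  have "\<sigma> \<in> S" using c unfolding S_def by simp
  then have ne: "card ` S \<noteq> {}" by blast
  have "Max (card ` S) \<in> card ` S" using finS ne by (intro Max_in) auto
  then obtain D where D: "D \<in> S" "card D = Max (card ` S)" by auto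
  have mx: "card D' \<le> card D" if "D' \<in> S" for D' using D(2) finS that by simp
  have "D \<in> MaxCliques F"
    unfolding MaxCliques_def
  proof (intro CollectI conjI allI impI)
    show "clique F D" using D(1) unfolding S_def by simp
  next
    fix D' assume a: "clique F D' \<and> D \<subseteq> D'"
    then have "D' \<in> S" using D(1) unfolding S_def by auto
    then have "card D' \<le> card D" by (rule mx)
    moreover have "finite D'" using a finV unfolding clique_def using finite_subset by blast
    ultimately show "D' = D" using a card_subset_eq by (metis antisym card_mono)
  qed
  then show ?thesis using D(1) unfolding S_def by auto
qed

lemma MC_sub: "C \<in> MaxCliques F \<Longrightarrow> C \<subseteq> verts F"
  unfolding MaxCliques_def clique_def by auto

lemma MC_finite: "graph F \<Longrightarrow> finite (MaxCliques F)"
proof -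
  assume "graph F"
  then have "finite (Pow (verts F))" unfolding graph_def by simp
  moreover have "MaxCliques F \<subseteq> Pow (verts F)" using MC_sub by blast
  ultimately show ?thesis by (rule finite_subset[rotated])
qed

lemma MC_ne: "graph F \<Longrightarrow> MaxCliques F \<noteq> {}"
proof -
  assume g: "graph F"
  have "clique F {}" unfolding clique_def by simp
  then show ?thesis using ext_max[OF g] by blast
qed

lemma clique_indicator:
  fixes F :: "'a graph"
  assumes g: "graph F" and sV: "\<sigma> \<subseteq> verts F" and ne: "\<sigma> \<noteq> {}"
  shows "(if clique F \<sigma> then 1 else 0) =
    (\<Sum>S\<in>Pow (MaxCliques F) - {{}}. - ((-1::real) ^ card S) * (if \<sigma> \<subseteq> \<Inter>S then 1 else 0))"
proof -
  define M where "M = MaxCliques F"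
  define M\<sigma> where "M\<sigma> = {C \<in> M. \<sigma> \<subseteq> C}"
  have finM: "finite M" unfolding M_def using g by (rule MC_finite)
  have MM: "M\<sigma> \<subseteq> M" unfolding M\<sigma>_def by auto
  have finMs: "finite M\<sigma>" using finM MM finite_subset by blast
  have "(\<Sum>S\<in>Pow M - {{}}. - ((-1::real) ^ card S) * (if \<sigma> \<subseteq> \<Inter>S then 1 else 0))
      = (\<Sum>S\<in>Pow M - {{}}. if S \<subseteq> M\<sigma> then - ((-1::real) ^ card S) else 0)"
  proof (rule sum.cong)
    fix S assume "S \<in> Pow M - {{}}"
    then have "S \<subseteq> M" "S \<noteq> {}" by auto
    then have "\<sigma> \<subseteq> \<Inter>S \<longleftrightarrow> S \<subseteq> M\<sigma>" unfolding M\<sigma>_def by auto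
    then show "- ((-1::real) ^ card S) * (if \<sigma> \<subseteq> \<Inter>S then 1 else 0) = (if S \<subseteq> M\<sigma> then - ((-1::real) ^ card S) else 0)"
      by simp
  qed simp
  also have "\<dots> = (\<Sum>S\<in>Pow M\<sigma> - {{}}. - ((-1::real) ^ card S))"
  proof -
    have "(\<Sum>S\<in>Pow M - {{}}. if S \<subseteq> M\<sigma> then - ((-1::real) ^ card S) else 0)
        = (\<Sum>S\<in>Pow M\<sigma> - {{}}. if S \<subseteq> M\<sigma> then - ((-1::real) ^ card S) else 0)"
      using finM MM by (intro sum.mono_neutral_right) auto
    also have "\<dots> = (\<Sum>S\<in>Pow M\<sigma> - {{}}. - ((-1::real) ^ card S))"
      by (rule sum.cong) auto
    finally show ?thesis .
  qed
  also have "\<dots> = (if M\<sigma> = {} then 0 else 1)" using finMs by (rule alt_sum_Pow_minus)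
  also have "\<dots> = (if clique F \<sigma> then 1 else 0)"
  proof -
    have "M\<sigma> \<noteq> {} \<longleftrightarrow> clique F \<sigma>"
    proof
      assume "M\<sigma> \<noteq> {}"
      then obtain C where "C \<in> M" "\<sigma> \<subseteq> C" unfolding M\<sigma>_def by auto
      then show "clique F \<sigma>" unfolding M_def MaxCliques_def clique_def by blast
    next
      assume "clique F \<sigma>"
      then show "M\<sigma> \<noteq> {}" using ext_max[OF g] unfolding M\<sigma>_def M_def by blast
    qed
    then show ?thesis by auto
  qed
  finally show ?thesis unfolding M_def by simp
qed

lemma inner_sum:
  assumes "finite A"
  shows "(\<Sum>\<sigma>\<in>Pow A. (if \<sigma> \<noteq> {} then - ((-1::real) ^ card \<sigma>) else 0) * (if \<sigma> \<subseteq> X then 1 else 0))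
       = (if X \<inter> A \<noteq> {} then 1 else 0)"
proof -
  have "(\<Sum>\<sigma>\<in>Pow A. (if \<sigma> \<noteq> {} then - ((-1::real) ^ card \<sigma>) else 0) * (if \<sigma> \<subseteq> X then 1 else 0))
      = (\<Sum>\<sigma>\<in>Pow A. if \<sigma> \<subseteq> A \<inter> X then (if \<sigma> \<noteq> {} then - ((-1::real) ^ card \<sigma>) else 0) else 0)"
    by (rule sum.cong) auto
  also have "\<dots> = (\<Sum>\<sigma>\<in>Pow (A \<inter> X). if \<sigma> \<subseteq> A \<inter> X then (if \<sigma> \<noteq> {} then - ((-1::real) ^ card \<sigma>) else 0) else 0)"
    using assms by (intro sum.mono_neutral_right) auto
  also have "\<dots> = (\<Sum>\<sigma>\<in>Pow (A \<inter> X). if \<sigma> \<noteq> {} then - ((-1::real) ^ card \<sigma>) else 0)"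
    by (rule sum.cong) auto
  also have "\<dots> = (if A \<inter> X = {} then 0 else 1)" using assms by (intro alt_sum_Pow_ne) simp
  finally show ?thesis by (auto simp: Int_commute)
qed

lemma chi_nerve:
  fixes F :: "'a graph"
  assumes g: "graph F" and AV: "A \<subseteq> verts F"
  shows "chi F A = (\<Sum>S\<in>Pow (MaxCliques F) - {{}}. - ((-1::real) ^ card S) * (if \<Inter>S \<inter> A \<noteq> {} then 1 else 0))"
proof -
  define M where "M = Pow (MaxCliques F) - {{}}"
  define e where "e \<sigma> = (if \<sigma> \<noteq> {} then - ((-1::real) ^ card \<sigma>) else 0)" for \<sigma> :: "'a set"
  define c where "c S = - ((-1::real) ^ card S)" for S :: "'a set set"
  have finA: "finite A" using g AV unfolding graph_def using finite_subset by blast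
  have finM: "finite M" unfolding M_def using MC_finite[OF g] by simp
  have "chi F A = (\<Sum>\<sigma>\<in>Pow A. e \<sigma> * (if clique F \<sigma> then 1 else 0))"
    unfolding chi_def e_def by (rule sum.cong) auto
  also have "\<dots> = (\<Sum>\<sigma>\<in>Pow A. e \<sigma> * (\<Sum>S\<in>M. c S * (if \<sigma> \<subseteq> \<Inter>S then 1 else 0)))"
  proof (rule sum.cong)
    fix \<sigma> assume s: "\<sigma> \<in> Pow A"
    show "e \<sigma> * (if clique F \<sigma> then 1 else 0) = e \<sigma> * (\<Sum>S\<in>M. c S * (if \<sigma> \<subseteq> \<Inter>S then 1 else 0))"
    proof (cases "\<sigma> = {}")
      case True then show ?thesis unfolding e_def by simp
    next
      case False
      have "\<sigma> \<subseteq> verts F" using s AV by auto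
      then show ?thesis using clique_indicator[OF g _ False] unfolding M_def c_def by simp
    qed
  qed simp
  also have "\<dots> = (\<Sum>\<sigma>\<in>Pow A. \<Sum>S\<in>M. e \<sigma> * (c S * (if \<sigma> \<subseteq> \<Inter>S then 1 else 0)))"
    by (simp add: sum_distrib_left)
  also have "\<dots> = (\<Sum>S\<in>M. \<Sum>\<sigma>\<in>Pow A. e \<sigma> * (c S * (if \<sigma> \<subseteq> \<Inter>S then 1 else 0)))"
    by (rule sum.swap)
  also have "\<dots> = (\<Sum>S\<in>M. c S * (\<Sum>\<sigma>\<in>Pow A. e \<sigma> * (if \<sigma> \<subseteq> \<Inter>S then 1 else 0)))"
    by (simp add: sum_distrib_left mult.left_commute)
  also have "\<dots> = (\<Sum>S\<in>M. c S * (if \<Inter>S \<inter> A \<noteq> {} then 1 else 0))"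
    unfolding e_def using inner_sum[OF finA] by simp
  finally show ?thesis unfolding M_def c_def .
qed

lemma sum_cover_reindex:
  assumes fin: "finite V" and BV: "B \<subseteq> V"
  shows "(\<Sum>A\<in>{A. A \<subseteq> V \<and> A \<union> B = V}. f A) = (\<Sum>C\<in>Pow B. f ((V - B) \<union> C))"
proof -
  have inj: "inj_on (\<lambda>C. (V - B) \<union> C) (Pow B)"
  proof (rule inj_onI)
    fix C D assume "C \<in> Pow B" "D \<in> Pow B" "(V - B) \<union> C = (V - B) \<union> D"
    then show "C = D" by blast
  qed
  have img: "(\<lambda>C. (V - B) \<union> C) ` Pow B = {A. A \<subseteq> V \<and> A \<union> B = V}"
  proof
    show "(\<lambda>C. (V - B) \<union> C) ` Pow B \<subseteq> {A. A \<subseteq> V \<and> A \<union> B = V}" using BV by auto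
  next
    show "{A. A \<subseteq> V \<and> A \<union> B = V} \<subseteq> (\<lambda>C. (V - B) \<union> C) ` Pow B"
    proof
      fix A assume "A \<in> {A. A \<subseteq> V \<and> A \<union> B = V}"
      then have "A = (V - B) \<union> (A \<inter> B)" "A \<inter> B \<in> Pow B" by auto
      then show "A \<in> (\<lambda>C. (V - B) \<union> C) ` Pow B" by blast
    qed
  qed
  show ?thesis unfolding img[symmetric] using inj by (simp add: sum.reindex)
qed

lemma w_sum:
  assumes fin: "finite V" and BV: "B \<subseteq> V" and IV: "I \<subseteq> V"
  shows "(\<Sum>C\<in>Pow B. - ((-1::real) ^ card C) * (if I \<inter> ((V - B) \<union> C) \<noteq> {} then 1 else 0))
       = (if B = I then 1 else 0) - (if B = {} then 1 else 0)"
proof -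
  have finB: "finite B" using fin BV finite_subset by blast
  have "(\<Sum>C\<in>Pow B. - ((-1::real) ^ card C) * (if I \<inter> ((V - B) \<union> C) \<noteq> {} then 1 else 0))
     = (\<Sum>C\<in>Pow B. - ((-1::real) ^ card C)) - (\<Sum>C\<in>Pow B. if C \<subseteq> B - I \<and> I \<subseteq> B then - ((-1::real) ^ card C) else 0)"
  proof -
    have "(\<Sum>C\<in>Pow B. - ((-1::real) ^ card C) * (if I \<inter> ((V - B) \<union> C) \<noteq> {} then 1 else 0))
        = (\<Sum>C\<in>Pow B. - ((-1::real) ^ card C) - (if C \<subseteq> B - I \<and> I \<subseteq> B then - ((-1::real) ^ card C) else 0))"
    proof (rule sum.cong)
      fix C assume C: "C \<in> Pow B"
      have "I \<inter> ((V - B) \<union> C) = {} \<longleftrightarrow> C \<subseteq> B - I \<and> I \<subseteq> B" using C IV by blast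
      then show "- ((-1::real) ^ card C) * (if I \<inter> ((V - B) \<union> C) \<noteq> {} then 1 else 0)
          = - ((-1::real) ^ card C) - (if C \<subseteq> B - I \<and> I \<subseteq> B then - ((-1::real) ^ card C) else 0)"
        by auto
    qed simp
    then show ?thesis by (simp add: sum_subtractf)
  qed
  also have "(\<Sum>C\<in>Pow B. - ((-1::real) ^ card C)) = - (if B = {} then 1 else 0)"
    using alt_sum_Pow[OF finB] by (simp add: sum_negf)
  also have "(\<Sum>C\<in>Pow B. if C \<subseteq> B - I \<and> I \<subseteq> B then - ((-1::real) ^ card C) else 0) = - (if B = I then 1 else 0)"
  proof (cases "I \<subseteq> B")
    case True
    have "(\<Sum>C\<in>Pow B. if C \<subseteq> B - I \<and> I \<subseteq> B then - ((-1::real) ^ card C) else 0)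
        = (\<Sum>C\<in>Pow (B - I). if C \<subseteq> B - I \<and> I \<subseteq> B then - ((-1::real) ^ card C) else 0)"
      using finB by (intro sum.mono_neutral_right) auto
    also have "\<dots> = (\<Sum>C\<in>Pow (B - I). - ((-1::real) ^ card C))"
      using True by (intro sum.cong) auto
    also have "\<dots> = - (if B - I = {} then 1 else 0)"
      using alt_sum_Pow[of "B - I"] finB by (simp add: sum_negf)
    also have "\<dots> = - (if B = I then 1 else 0)" using True by auto
    finally show ?thesis .
  next
    case False
    then show ?thesis by auto
  qed
  finally show ?thesis by simp
qed

lemma L_indicator:
  assumes fin: "finite V" and IV: "I \<subseteq> V"
  shows "(\<Sum>A\<in>Pow V. L V g A * (if I \<inter> A \<noteq> {} then 1 else 0)) = g I - g {}"
proof -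
  define u where "u A = (if I \<inter> A \<noteq> {} then 1 else (0::real))" for A
  define t where "t A B = (if A \<union> B = V then - ((-1::real) ^ card (A \<inter> B)) * g B else 0)" for A B
  have LL: "L V g A = (\<Sum>B\<in>Pow V. t A B)" for A
  proof -
    have "L V g A = (\<Sum>B\<in>{B \<in> Pow V. A \<union> B = V}. - ((-1::real) ^ card (A \<inter> B)) * g B)"
      unfolding L_def by (rule sum.cong) auto
    also have "\<dots> = (\<Sum>B\<in>Pow V. t A B)"
      unfolding t_def using fin by (intro sum.inter_filter) simp
    finally show ?thesis .
  qed
  have "(\<Sum>A\<in>Pow V. L V g A * u A) = (\<Sum>A\<in>Pow V. \<Sum>B\<in>Pow V. t A B * u A)"
    unfolding LL by (simp add: sum_distrib_right)
  also have "\<dots> = (\<Sum>B\<in>Pow V. \<Sum>A\<in>Pow V. t A B * u A)" by (rule sum.swap)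
  also have "\<dots> = (\<Sum>B\<in>Pow V. g B * ((if B = I then 1 else 0) - (if B = {} then 1 else 0)))"
  proof (rule sum.cong)
    fix B assume B: "B \<in> Pow V"
    then have BV: "B \<subseteq> V" by simp
    have "(\<Sum>A\<in>Pow V. t A B * u A) = (\<Sum>A\<in>Pow V. if A \<union> B = V then g B * (- ((-1::real) ^ card (A \<inter> B)) * u A) else 0)"
      unfolding t_def by (rule sum.cong) auto
    also have "\<dots> = (\<Sum>A\<in>{A \<in> Pow V. A \<union> B = V}. g B * (- ((-1::real) ^ card (A \<inter> B)) * u A))"
      using fin by (intro sum.inter_filter[symmetric]) simp
    also have "{A \<in> Pow V. A \<union> B = V} = {A. A \<subseteq> V \<and> A \<union> B = V}" by auto
    also have "(\<Sum>A\<in>{A. A \<subseteq> V \<and> A \<union> B = V}. g B * (- ((-1::real) ^ card (A \<inter> B)) * u A))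
        = (\<Sum>C\<in>Pow B. g B * (- ((-1::real) ^ card (((V - B) \<union> C) \<inter> B)) * u ((V - B) \<union> C)))"
      by (rule sum_cover_reindex[OF fin BV])
    also have "\<dots> = (\<Sum>C\<in>Pow B. g B * (- ((-1::real) ^ card C) * u ((V - B) \<union> C)))"
    proof (rule sum.cong)
      fix C assume "C \<in> Pow B"
      then have "((V - B) \<union> C) \<inter> B = C" by auto
      then show "g B * (- ((-1::real) ^ card (((V - B) \<union> C) \<inter> B)) * u ((V - B) \<union> C))
          = g B * (- ((-1::real) ^ card C) * u ((V - B) \<union> C))" by simp
    qed simp
    also have "\<dots> = g B * (\<Sum>C\<in>Pow B. - ((-1::real) ^ card C) * u ((V - B) \<union> C))"
      by (simp add: sum_distrib_left)
    also have "\<dots> = g B * ((if B = I then 1 else 0) - (if B = {} then 1 else 0))"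
      unfolding u_def using w_sum[OF fin BV IV] by simp
    finally show "(\<Sum>A\<in>Pow V. t A B * u A) = g B * ((if B = I then 1 else 0) - (if B = {} then 1 else 0))" .
  qed simp
  also have "\<dots> = (\<Sum>B\<in>Pow V. (if B = I then g B else 0)) - (\<Sum>B\<in>Pow V. (if B = {} then g B else 0))"
    by (subst sum_subtractf[symmetric]) (rule sum.cong, auto)
  also have "\<dots> = g I - g {}" using fin IV by (simp add: sum.delta)
  finally show ?thesis unfolding u_def .
qed

lemma main_gen:
  fixes F :: "'a graph" and V' :: "'b set" and \<psi> :: "'a \<Rightarrow> 'b" and g :: "'b set \<Rightarrow> real"
  assumes gr: "graph F" and ch: "chordal F" and finV': "finite V'" and psi: "\<forall>v\<in>verts F. \<psi> v \<in> V'"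
  shows "(\<Sum>S\<in>Pow (MaxCliques F). - ((-1) ^ card S) * g (\<psi> ` Inter0 S))
       = (\<Sum>A\<in>Pow V'. L V' g A * real (CC F {v \<in> verts F. \<psi> v \<in> A}))"
proof -
  define M where "M = Pow (MaxCliques F) - {{}}"
  define c where "c S = - ((-1::real) ^ card S)" for S :: "'a set set"
  have finMC: "finite (MaxCliques F)" using gr by (rule MC_finite)
  have finM: "finite M" unfolding M_def using finMC by simp
  have finV: "finite (verts F)" using gr unfolding graph_def by simp
  have InterV: "\<Inter>S \<subseteq> verts F" if "S \<in> M" for S
  proof -
    from that obtain C where "C \<in> S" "S \<subseteq> MaxCliques F" unfolding M_def by auto
    then show ?thesis using MC_sub by blast
  qed
  have CCe: "real (CC F {v \<in> verts F. \<psi> v \<in> A}) = (\<Sum>S\<in>M. c S * (if \<psi> ` \<Inter>S \<inter> A \<noteq> {} then 1 else 0))" for A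
  proof -
    have sub: "{v \<in> verts F. \<psi> v \<in> A} \<subseteq> verts F" by auto
    have fin: "finite {v \<in> verts F. \<psi> v \<in> A}" using finV by simp
    have "real (CC F {v \<in> verts F. \<psi> v \<in> A}) = chi F {v \<in> verts F. \<psi> v \<in> A}"
      by (rule CC_chi[OF ch sub fin])
    also have "\<dots> = (\<Sum>S\<in>M. c S * (if \<Inter>S \<inter> {v \<in> verts F. \<psi> v \<in> A} \<noteq> {} then 1 else 0))"
      unfolding M_def c_def by (rule chi_nerve[OF gr sub])
    also have "\<dots> = (\<Sum>S\<in>M. c S * (if \<psi> ` \<Inter>S \<inter> A \<noteq> {} then 1 else 0))"
    proof (rule sum.cong)
      fix S assume "S \<in> M"
      then have "\<Inter>S \<subseteq> verts F" by (rule InterV)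
      then have "(\<Inter>S \<inter> {v \<in> verts F. \<psi> v \<in> A} \<noteq> {}) = (\<psi> ` \<Inter>S \<inter> A \<noteq> {})" by blast
      then show "c S * (if \<Inter>S \<inter> {v \<in> verts F. \<psi> v \<in> A} \<noteq> {} then 1 else 0) = c S * (if \<psi> ` \<Inter>S \<inter> A \<noteq> {} then 1 else 0)"
        by simp
    qed simp
    finally show ?thesis .
  qed
  have "(\<Sum>A\<in>Pow V'. L V' g A * real (CC F {v \<in> verts F. \<psi> v \<in> A}))
      = (\<Sum>A\<in>Pow V'. \<Sum>S\<in>M. L V' g A * (c S * (if \<psi> ` \<Inter>S \<inter> A \<noteq> {} then 1 else 0)))"
    unfolding CCe by (simp add: sum_distrib_left)
  also have "\<dots> = (\<Sum>S\<in>M. \<Sum>A\<in>Pow V'. L V' g A * (c S * (if \<psi> ` \<Inter>S \<inter> A \<noteq> {} then 1 else 0)))"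
    by (rule sum.swap)
  also have "\<dots> = (\<Sum>S\<in>M. c S * (\<Sum>A\<in>Pow V'. L V' g A * (if \<psi> ` \<Inter>S \<inter> A \<noteq> {} then 1 else 0)))"
    by (simp add: sum_distrib_left mult.left_commute)
  also have "\<dots> = (\<Sum>S\<in>M. c S * (g (\<psi> ` \<Inter>S) - g {}))"
  proof (rule sum.cong)
    fix S assume "S \<in> M"
    then have "\<psi> ` \<Inter>S \<subseteq> V'" using InterV psi by blast
    then show "c S * (\<Sum>A\<in>Pow V'. L V' g A * (if \<psi> ` \<Inter>S \<inter> A \<noteq> {} then 1 else 0)) = c S * (g (\<psi> ` \<Inter>S) - g {})"
      using L_indicator[OF finV'] by simp
  qed simp
  also have "\<dots> = (\<Sum>S\<in>M. c S * g (\<psi> ` \<Inter>S)) - g {} * (\<Sum>S\<in>M. c S)"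
    by (simp add: sum_subtractf right_diff_distrib sum_distrib_left mult.commute)
  also have "(\<Sum>S\<in>M. c S) = 1"
    unfolding M_def c_def using alt_sum_Pow_minus[OF finMC] MC_ne[OF gr] by simp
  finally have R: "(\<Sum>A\<in>Pow V'. L V' g A * real (CC F {v \<in> verts F. \<psi> v \<in> A}))
      = (\<Sum>S\<in>M. c S * g (\<psi> ` \<Inter>S)) - g {}" by simp
  have "(\<Sum>S\<in>Pow (MaxCliques F). - ((-1) ^ card S) * g (\<psi> ` Inter0 S))
      = - ((-1) ^ card ({}::'a set set)) * g (\<psi> ` Inter0 {}) + (\<Sum>S\<in>M. - ((-1) ^ card S) * g (\<psi> ` Inter0 S))"
    unfolding M_def using finMC by (intro sum.remove) auto
  also have "(\<Sum>S\<in>M. - ((-1) ^ card S) * g (\<psi> ` Inter0 S)) = (\<Sum>S\<in>M. c S * g (\<psi> ` \<Inter>S))"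
    unfolding c_def M_def Inter0_def by (rule sum.cong) auto
  finally show ?thesis using R by (simp add: Inter0_def)
qed

theorem lemma3p5:
  fixes F :: "'a graph"
  assumes "graph F" and "chordal F"
  shows "(\<forall>f :: 'a set \<Rightarrow> real.
            (\<Sum>S \<in> Pow (MaxCliques F). - ((-1) ^ card S) * f (Inter0 S))
            = (\<Sum>A \<in> Pow (verts F). L (verts F) f A * real (CC F A)))
       \<and> (\<forall>(G :: 'b graph) (\<phi> :: 'a \<Rightarrow> 'b) (g :: 'b set \<Rightarrow> real).
            graph G \<longrightarrow> hom F G \<phi> \<longrightarrow>
            (\<Sum>S \<in> Pow (MaxCliques F). - ((-1) ^ card S) * g (\<phi> ` Inter0 S))
            = (\<Sum>A \<in> Pow (verts G). L (verts G) g A * real (CC F {v \<in> verts F. \<phi> v \<in> A})))"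
proof (intro conjI allI impI)
  fix f :: "'a set \<Rightarrow> real"
  have finV: "finite (verts F)" using assms(1) unfolding graph_def by simp
  have "(\<Sum>S \<in> Pow (MaxCliques F). - ((-1) ^ card S) * f ((\<lambda>x. x) ` Inter0 S))
      = (\<Sum>A \<in> Pow (verts F). L (verts F) f A * real (CC F {v \<in> verts F. v \<in> A}))"
    using main_gen[OF assms finV, of "\<lambda>x. x" f] by simp
  also have "\<dots> = (\<Sum>A \<in> Pow (verts F). L (verts F) f A * real (CC F A))"
  proof (rule sum.cong)
    fix A assume "A \<in> Pow (verts F)"
    then have "{v \<in> verts F. v \<in> A} = A" by auto
    then show "L (verts F) f A * real (CC F {v \<in> verts F. v \<in> A}) = L (verts F) f A * real (CC F A)" by simp
  qed simp
  finally show "(\<Sum>S \<in> Pow (MaxCliques F). - ((-1) ^ card S) * f (Inter0 S))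
            = (\<Sum>A \<in> Pow (verts F). L (verts F) f A * real (CC F A))" by simp
next
  fix G :: "'b graph" and \<phi> :: "'a \<Rightarrow> 'b" and g :: "'b set \<Rightarrow> real"
  assume gG: "graph G" and h: "hom F G \<phi>"
  have finG: "finite (verts G)" using gG unfolding graph_def by simp
  have psi: "\<forall>v\<in>verts F. \<phi> v \<in> verts G" using h unfolding hom_def by blast
  show "(\<Sum>S \<in> Pow (MaxCliques F). - ((-1) ^ card S) * g (\<phi> ` Inter0 S))
            = (\<Sum>A \<in> Pow (verts G). L (verts G) g A * real (CC F {v \<in> verts F. \<phi> v \<in> A}))"
    by (rule main_gen[OF assms finG psi])
qed

end
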